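(* Let $0\le k\le n$, let $A=(a_{i,j})\in\mathbb{R}^{n\times n}$ be a Monge matrix and $B=(b_{i,j})\in\mathbb{R}^{n\times n}$ an Anti-Monge matrix, and consider RecovAP with $c_1(\{u_i,v_j\})=a_{i,j}$ and $c_2(\{u_i,v_j\})=b_{i,j}$. Let $m=\lfloor\frac{n-k}{2}\rfloor$ and $I=\{1,\dots,m\}\cup\{n+1-m,\dots,n\}$. Then there exists an optimal solution $M_1,M_2$ such that (1) $\{u_i,v_i\}\in M_1$ for all $i\in I$; (2) $\{u_i,v_{n+1-i}\}\in M_2$ for all $i\in I$; (3) $M_1\cap M_2$ is an optimal solution of the assignment problem with cost $c_1+c_2$ (i.e. a minimum-cost perfect matching with respect to $c_1+c_2$) on the complete bipartite subgraph induced by $\{u_i: m+1\le i\le n-m\}$ and $\{v_i: m+1\le i\le n-m\}$.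
   Context: $K_{n,n}$ has vertex classes $U=\{u_1,\dots,u_n\}$, $V=\{v_1,\dots,v_n\}$. RecovAP: given $c_1,c_2:E(K_{n,n})\to\mathbb{R}$ and an integer $k$, find perfect matchings $M_1,M_2$ of $K_{n,n}$ with $|M_1\cap M_2|\ge k$ minimizing $c_1(M_1)+c_2(M_2)$; an optimal solution is a minimizing feasible pair. A matrix $A$ is Monge if $a_{i,j}+a_{k,l}\le a_{i,l}+a_{k,j}$ for all $i<k$, $j<l$; a matrix $B$ is Anti-Monge if $b_{i,j}+b_{k,l}\ge b_{i,l}+b_{k,j}$ for all $i<k$, $j<l$. *)

theory Defs
  imports Complex_Main
begin

text \<open>Vertices u_i and v_j of K_{n,n} are indexed by 1..n; an edge {u_i, v_j}
  is represented by the pair (i, j).  A cost function is a function on index pairs.\<close>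

definition perfect_matching_on :: "nat set \<Rightarrow> nat set \<Rightarrow> (nat \<times> nat) set \<Rightarrow> bool" where
  "perfect_matching_on S T M \<longleftrightarrow> M \<subseteq> S \<times> T \<and>
     (\<forall>i\<in>S. \<exists>!j. (i, j) \<in> M) \<and> (\<forall>j\<in>T. \<exists>!i. (i, j) \<in> M)"

abbreviation perfect_matching :: "nat \<Rightarrow> (nat \<times> nat) set \<Rightarrow> bool" where
  "perfect_matching n M \<equiv> perfect_matching_on {1..n} {1..n} M"

definition cost :: "(nat \<Rightarrow> nat \<Rightarrow> real) \<Rightarrow> (nat \<times> nat) set \<Rightarrow> real" where
  "cost c M = (\<Sum>(i, j)\<in>M. c i j)"

definition recov_feasible :: "nat \<Rightarrow> nat \<Rightarrow> (nat \<times> nat) set \<Rightarrow> (nat \<times> nat) set \<Rightarrow> bool" where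
  "recov_feasible n k M1 M2 \<longleftrightarrow>
     perfect_matching n M1 \<and> perfect_matching n M2 \<and> card (M1 \<inter> M2) \<ge> k"

definition recov_optimal :: "nat \<Rightarrow> nat \<Rightarrow> (nat \<Rightarrow> nat \<Rightarrow> real) \<Rightarrow> (nat \<Rightarrow> nat \<Rightarrow> real)
    \<Rightarrow> (nat \<times> nat) set \<Rightarrow> (nat \<times> nat) set \<Rightarrow> bool" where
  "recov_optimal n k c1 c2 M1 M2 \<longleftrightarrow> recov_feasible n k M1 M2 \<and>
     (\<forall>N1 N2. recov_feasible n k N1 N2 \<longrightarrow> cost c1 M1 + cost c2 M2 \<le> cost c1 N1 + cost c2 N2)"

definition optimal_assignment :: "nat set \<Rightarrow> nat set \<Rightarrow> (nat \<Rightarrow> nat \<Rightarrow> real) \<Rightarrow> (nat \<times> nat) set \<Rightarrow> bool" where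
  "optimal_assignment S T c M \<longleftrightarrow> perfect_matching_on S T M \<and>
     (\<forall>N. perfect_matching_on S T N \<longrightarrow> cost c M \<le> cost c N)"

definition monge :: "nat \<Rightarrow> (nat \<Rightarrow> nat \<Rightarrow> real) \<Rightarrow> bool" where
  "monge n a \<longleftrightarrow> (\<forall>i k j l. 1 \<le> i \<and> i < k \<and> k \<le> n \<and> 1 \<le> j \<and> j < l \<and> l \<le> n \<longrightarrow>
       a i j + a k l \<le> a i l + a k j)"

definition anti_monge :: "nat \<Rightarrow> (nat \<Rightarrow> nat \<Rightarrow> real) \<Rightarrow> bool" where
  "anti_monge n b \<longleftrightarrow> (\<forall>i k j l. 1 \<le> i \<and> i < k \<and> k \<le> n \<and> 1 \<le> j \<and> j < l \<and> l \<le> n \<longrightarrow>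
       b i j + b k l \<ge> b i l + b k j)"

end

theory Submission
  imports Defs
begin

definition csum :: "(nat \<Rightarrow> nat \<Rightarrow> real) \<Rightarrow> (nat \<Rightarrow> nat) \<Rightarrow> nat set \<Rightarrow> real" where
  "csum a f R = (\<Sum>i\<in>R. a i (f i))"

definition mg :: "nat set \<Rightarrow> (nat \<Rightarrow> nat \<Rightarrow> real) \<Rightarrow> bool" where
  "mg U a \<longleftrightarrow> (\<forall>i\<in>U. \<forall>k\<in>U. \<forall>j\<in>U. \<forall>l\<in>U. i < k \<longrightarrow> j < l \<longrightarrow> a i j + a k l \<le> a i l + a k j)"

definition amg :: "nat set \<Rightarrow> (nat \<Rightarrow> nat \<Rightarrow> real) \<Rightarrow> bool" where
  "amg U b \<longleftrightarrow> (\<forall>i\<in>U. \<forall>k\<in>U. \<forall>j\<in>U. \<forall>l\<in>U. i < k \<longrightarrow> j < l \<longrightarrow> b i j + b k l \<ge> b i l + b k j)"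

lemma mgD: "mg U a \<Longrightarrow> i \<in> U \<Longrightarrow> k \<in> U \<Longrightarrow> j \<in> U \<Longrightarrow> l \<in> U \<Longrightarrow> i < k \<Longrightarrow> j < l \<Longrightarrow> a i j + a k l \<le> a i l + a k j"
  unfolding mg_def by blast

lemma amgD: "amg U b \<Longrightarrow> i \<in> U \<Longrightarrow> k \<in> U \<Longrightarrow> j \<in> U \<Longrightarrow> l \<in> U \<Longrightarrow> i < k \<Longrightarrow> j < l \<Longrightarrow> b i j + b k l \<ge> b i l + b k j"
  unfolding amg_def by blast

lemma monge_mg: "monge n a \<Longrightarrow> mg {1..n} a"
  unfolding monge_def mg_def by auto

lemma anti_amg: "anti_monge n a \<Longrightarrow> amg {1..n} a"
  unfolding anti_monge_def amg_def by auto

lemma patch_bij: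
  assumes "bij_betw f S T" "R \<subseteq> S" "bij_betw g R (f ` R)" "\<forall>i\<in>S-R. g i = f i"
  shows "bij_betw g S T"
proof -
  have inj: "inj_on f S" and im: "f ` S = T" using assms(1) by (auto simp: bij_betw_def)
  have "g ` S = g ` R \<union> g ` (S - R)" using assms(2) by blast
  also have "g ` (S - R) = f ` (S - R)" using assms(4) by auto
  also have "g ` R = f ` R" using assms(3) by (simp add: bij_betw_def)
  finally have gi: "g ` S = T" using im assms(2) by blast
  have "inj_on g S"
  proof (rule inj_onI)
    fix x y assume xy: "x \<in> S" "y \<in> S" "g x = g y"
    show "x = y"
    proof (cases "x \<in> R")
      case True
      show ?thesis
      proof (cases "y \<in> R")
        case True
        then show ?thesis using \<open>x \<in> R\<close> xy assms(3) by (auto simp: bij_betw_def inj_on_def)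
      next
        case False
        have "g x \<in> f ` R" using True assms(3) by (auto simp: bij_betw_def)
        then obtain z where z: "z \<in> R" "g x = f z" by auto
        have "f y = f z" using z xy False assms(4) by auto
        then have "y = z" using inj xy z assms(2) by (auto simp: inj_on_def)
        then show ?thesis using False z by auto
      qed
    next
      case False
      show ?thesis
      proof (cases "y \<in> R")
        case True
        have "g y \<in> f ` R" using True assms(3) by (auto simp: bij_betw_def)
        then obtain z where z: "z \<in> R" "g y = f z" by auto
        have "f x = f z" using z xy False assms(4) by auto
        then have "x = z" using inj xy z assms(2) by (auto simp: inj_on_def)
        then show ?thesis using False z by auto
      next
        case False
        then show ?thesis using \<open>x \<notin> R\<close> xy assms(4) inj by (auto simp: inj_on_def)
      qed
    qed
  qed
  then show ?thesis using gi by (simp add: bij_betw_def)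
qed

lemma patch_sum:
  assumes "finite S" "R \<subseteq> S" "\<forall>i\<in>S-R. g i = f i"
  shows "csum a g S = csum a f S - csum a f R + csum a g R"
proof -
  have "csum a g S = csum a g R + (\<Sum>i\<in>S-R. a i (g i))"
    unfolding csum_def using assms by (metis add.commute sum.subset_diff)
  moreover have "csum a f S = csum a f R + (\<Sum>i\<in>S-R. a i (f i))"
    unfolding csum_def using assms by (metis add.commute sum.subset_diff)
  moreover have "(\<Sum>i\<in>S-R. a i (g i)) = (\<Sum>i\<in>S-R. a i (f i))"
    using assms(3) by (auto intro: sum.cong)
  ultimately show ?thesis by simp
qed

lemma swap_bij:
  assumes "bij_betw h R C" "i \<in> R" "j \<in> R"
  shows "bij_betw (h(i := h j, j := h i)) R C"
proof -
  have "h(i := h j, j := h i) = h \<circ> (id(i := j, j := i))" by (auto simp: fun_eq_iff)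
  moreover have "bij_betw (id(i := j, j := i)) R R"
    using assms(2,3) unfolding bij_betw_def inj_on_def by (auto simp: image_def) 
  ultimately show ?thesis using assms(1) bij_betw_trans by metis
qed

lemma cyc3_bij:
  assumes "bij_betw h R C" "i \<in> R" "j \<in> R" "l \<in> R" "i \<noteq> j" "j \<noteq> l" "i \<noteq> l"
  shows "bij_betw (h(i := h j, j := h l, l := h i)) R C"
proof -
  have "h(i := h j, j := h l, l := h i) = h \<circ> (id(i := j, j := l, l := i))" by (auto simp: fun_eq_iff)
  moreover have "bij_betw (id(i := j, j := l, l := i)) R R"
    using assms(2-7) unfolding bij_betw_def inj_on_def by (auto simp: image_def) 
  ultimately show ?thesis using assms(1) bij_betw_trans by metis
qed


lemma csum_fin2:
  assumes "finite R" "D \<subseteq> R" "\<forall>i\<in>R-D. g i = f i"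
  shows "csum a g R - csum a f R = csum a g D - csum a f D"
  using patch_sum[OF assms] by simp

lemma swap_cost:
  assumes "finite R" "i \<in> R" "j \<in> R" "i \<noteq> j"
  shows "csum a (f(i := f j, j := f i)) R - csum a f R = a i (f j) + a j (f i) - a i (f i) - a j (f j)"
proof -
  have "csum a (f(i := f j, j := f i)) R - csum a f R = csum a (f(i := f j, j := f i)) {i,j} - csum a f {i,j}"
    by (rule csum_fin2) (use assms in auto)
  then show ?thesis using assms(4) by (simp add: csum_def)
qed

lemma swap_mg:
  assumes "mg U a" "finite R" "R \<subseteq> U" "bij_betw f R C" "C \<subseteq> U" "i \<in> R" "j \<in> R" "i < j" "f j < f i"
  shows "csum a (f(i := f j, j := f i)) R \<le> csum a f R"
proof -
  have "f i \<in> U" "f j \<in> U" using assms(4-7) by (auto simp: bij_betw_def)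
  then have "a i (f j) + a j (f i) \<le> a i (f i) + a j (f j)"
    using mgD[OF assms(1), of i j "f j" "f i"] assms by auto
  then show ?thesis using swap_cost[OF assms(2,6,7), of a f] assms(8) by simp
qed

lemma swap_amg:
  assumes "amg U b" "finite R" "R \<subseteq> U" "bij_betw f R C" "C \<subseteq> U" "i \<in> R" "j \<in> R" "i < j" "f i < f j"
  shows "csum b (f(i := f j, j := f i)) R \<le> csum b f R"
proof -
  have "f i \<in> U" "f j \<in> U" using assms(4-7) by (auto simp: bij_betw_def)
  then have "b i (f j) + b j (f i) \<le> b i (f i) + b j (f j)"
    using amgD[OF assms(1), of i j "f i" "f j"] assms by auto
  then show ?thesis using swap_cost[OF assms(2,6,7), of b f] assms(8) by simp
qed

lemma norm_mg:
  assumes "mg U a" "finite R" "R \<subseteq> U" "C \<subseteq> U" "bij_betw f R C"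
    "rlo \<in> R" "rhi \<in> R" "rlo < rhi" "\<forall>i\<in>R. rlo \<le> i \<and> i \<le> rhi"
    "clo \<in> C" "chi \<in> C" "clo < chi" "\<forall>j\<in>C. clo \<le> j \<and> j \<le> chi"
  shows "\<exists>g. bij_betw g R C \<and> (\<forall>i. i \<notin> R \<longrightarrow> g i = f i) \<and> g rlo = clo \<and> g rhi = chi \<and> csum a g R \<le> csum a f R"
proof -
  obtain i1 where i1: "i1 \<in> R" "f i1 = clo" using assms(5,10) by (auto simp: bij_betw_def)
  obtain f1 where f1: "bij_betw f1 R C" "\<forall>i. i \<notin> R \<longrightarrow> f1 i = f i" "f1 rlo = clo" "csum a f1 R \<le> csum a f R"
  proof (cases "i1 = rlo")
    case True then show ?thesis using that[of f] i1 assms by auto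
  next
    case False
    have lt: "rlo < i1" using False assms(9) i1 by force
    have "f rlo \<noteq> clo" using False i1 assms(5,6) by (auto simp: bij_betw_def inj_on_def)
    moreover have "f rlo \<in> C" using assms(5,6) by (auto simp: bij_betw_def)
    ultimately have lt2: "f i1 < f rlo" using i1 assms(13) by force
    show ?thesis
      apply (rule that[of "f(rlo := f i1, i1 := f rlo)"])
      using swap_bij[OF assms(5,6) i1(1)] apply simp
      using assms(6) i1(1) apply auto[1]
      using i1 False apply simp
      using swap_mg[OF assms(1-3,5,4,6) i1(1) lt lt2] by simp
  qed
  obtain j1 where j1: "j1 \<in> R" "f1 j1 = chi" using f1(1) assms(11) by (auto simp: bij_betw_def)
  show ?thesis
  proof (cases "j1 = rhi")
    case True then show ?thesis using f1 j1 by auto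
  next
    case False
    have "j1 \<noteq> rlo" using j1 f1(3) assms(12) by auto
    have lt: "j1 < rhi" using False assms(9) j1 by force
    have "f1 rhi \<noteq> chi" using False j1 assms(7) f1(1) by (auto simp: bij_betw_def inj_on_def)
    moreover have "f1 rhi \<in> C" using f1(1) assms(7) by (auto simp: bij_betw_def)
    ultimately have lt2: "f1 rhi < f1 j1" using j1 assms(13) by force
    show ?thesis
      apply (rule exI[of _ "f1(j1 := f1 rhi, rhi := f1 j1)"])
      using swap_bij[OF f1(1) j1(1) assms(7)] swap_mg[OF assms(1-3) f1(1) assms(4) j1(1) assms(7) lt lt2]
        f1 j1 \<open>j1 \<noteq> rlo\<close> assms(6,7,8) by auto
  qed
qed

lemma norm_amg:
  assumes "amg U a" "finite R" "R \<subseteq> U" "C \<subseteq> U" "bij_betw f R C"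
    "rlo \<in> R" "rhi \<in> R" "rlo < rhi" "\<forall>i\<in>R. rlo \<le> i \<and> i \<le> rhi"
    "clo \<in> C" "chi \<in> C" "clo < chi" "\<forall>j\<in>C. clo \<le> j \<and> j \<le> chi"
  shows "\<exists>g. bij_betw g R C \<and> (\<forall>i. i \<notin> R \<longrightarrow> g i = f i) \<and> g rlo = chi \<and> g rhi = clo \<and> csum a g R \<le> csum a f R"
proof -
  obtain i1 where i1: "i1 \<in> R" "f i1 = chi" using assms(5,11) by (auto simp: bij_betw_def)
  obtain f1 where f1: "bij_betw f1 R C" "\<forall>i. i \<notin> R \<longrightarrow> f1 i = f i" "f1 rlo = chi" "csum a f1 R \<le> csum a f R"
  proof (cases "i1 = rlo")
    case True then show ?thesis using that[of f] i1 assms by auto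
  next
    case False
    have lt: "rlo < i1" using False assms(9) i1 by force
    have "f rlo \<noteq> chi" using False i1 assms(5,6) by (auto simp: bij_betw_def inj_on_def)
    moreover have "f rlo \<in> C" using assms(5,6) by (auto simp: bij_betw_def)
    ultimately have lt2: "f rlo < f i1" using i1 assms(13) by force
    show ?thesis
      apply (rule that[of "f(rlo := f i1, i1 := f rlo)"])
      using swap_bij[OF assms(5,6) i1(1)] apply simp
      using assms(6) i1(1) apply auto[1]
      using i1 False apply simp
      using swap_amg[OF assms(1-3,5,4,6) i1(1) lt lt2] by simp
  qed
  obtain j1 where j1: "j1 \<in> R" "f1 j1 = clo" using f1(1) assms(10) by (auto simp: bij_betw_def)
  show ?thesis
  proof (cases "j1 = rhi")
    case True then show ?thesis using f1 j1 by auto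
  next
    case False
    have "j1 \<noteq> rlo" using j1 f1(3) assms(12) by auto
    have lt: "j1 < rhi" using False assms(9) j1 by force
    have "f1 rhi \<noteq> clo" using False j1 assms(7) f1(1) by (auto simp: bij_betw_def inj_on_def)
    moreover have "f1 rhi \<in> C" using f1(1) assms(7) by (auto simp: bij_betw_def)
    ultimately have lt2: "f1 j1 < f1 rhi" using j1 assms(13) by force
    show ?thesis
      apply (rule exI[of _ "f1(j1 := f1 rhi, rhi := f1 j1)"])
      using swap_bij[OF f1(1) j1(1) assms(7)] swap_amg[OF assms(1-3) f1(1) assms(4) j1(1) assms(7) lt lt2]
        f1 j1 \<open>j1 \<noteq> rlo\<close> assms(6,7,8) by auto
  qed
qed


definition K1res where
  "K1res a b R C f1 f2 g1 g2 \<longleftrightarrow> bij_betw g1 R C \<and> bij_betw g2 R C \<and>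
     (\<forall>i. i \<notin> R \<longrightarrow> g1 i = f1 i \<and> g2 i = f2 i) \<and>
     (\<exists>y\<in>R. g1 y = g2 y \<and> (\<exists>u\<in>R. u < y) \<and> (\<exists>v\<in>R. y < v) \<and> (\<exists>u\<in>C. u < g1 y) \<and> (\<exists>v\<in>C. g1 y < v)) \<and>
     csum a g1 R + csum b g2 R \<le> csum a f1 R + csum b f2 R"

lemma cyc3_cost:
  assumes "finite R" "i \<in> R" "j \<in> R" "l \<in> R" "i \<noteq> j" "j \<noteq> l" "i \<noteq> l"
  shows "csum a (f(i := f j, j := f l, l := f i)) R - csum a f R =
     a i (f j) + a j (f l) + a l (f i) - a i (f i) - a j (f j) - a l (f l)"
proof -
  have "csum a (f(i := f j, j := f l, l := f i)) R - csum a f R = csum a (f(i := f j, j := f l, l := f i)) {i,j,l} - csum a f {i,j,l}"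
    by (rule csum_fin2) (use assms in auto)
  then show ?thesis using assms(5-7) by (simp add: csum_def)
qed

lemma K1resI:
  assumes "bij_betw g1 R C" "bij_betw g2 R C" "\<forall>i. i \<notin> R \<longrightarrow> g1 i = f1 i \<and> g2 i = f2 i"
    "y \<in> R" "g1 y = d" "g2 y = d" "ua \<in> R" "ua < y" "va \<in> R" "y < va" "uc \<in> C" "uc < d" "vc \<in> C" "d < vc"
    "csum a g1 R - csum a f1 R + (csum b g2 R - csum b f2 R) \<le> 0"
  shows "K1res a b R C f1 f2 g1 g2"
  unfolding K1res_def using assms by (smt (verit))

context
  fixes U R C :: "nat set" and a b :: "nat \<Rightarrow> nat \<Rightarrow> real" and h1 h2 :: "nat \<Rightarrow> nat"
    and x c rlo rhi clo chi :: nat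
  assumes A: "mg U a" "amg U b" "finite R" "R \<subseteq> U" "C \<subseteq> U" "bij_betw h1 R C" "bij_betw h2 R C"
    "x \<in> R" "h1 x = c" "h2 x = c" "rlo \<in> R" "rhi \<in> R" "rlo < rhi" "x \<noteq> rlo" "x \<noteq> rhi"
    "clo \<in> C" "chi \<in> C" "clo < chi" "c \<noteq> clo" "c \<noteq> chi"
    "h1 rlo = clo" "h1 rhi = chi" "h2 rlo = chi" "h2 rhi = clo"
begin

lemma cC: "c \<in> C" using A(6,8,9) by (auto simp: bij_betw_def)

lemma inU: "x \<in> U" "rlo \<in> U" "rhi \<in> U" "c \<in> U" "clo \<in> U" "chi \<in> U"
  using A cC by auto

lemmas mgA = mgD[OF A(1)] and amgA = amgD[OF A(2)]

lemma K1_MM: assumes "rlo < x" "x < rhi" "clo < c" "c < chi"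
  shows "K1res a b R C h1 h2 h1 h2"
  by (rule K1resI[where y=x and d=c and ua=rlo and va=rhi and uc=clo and vc=chi]) (use A assms cC in auto)

lemma K1_LM: assumes "x < rlo" "clo < c" "c < chi"
  shows "K1res a b R C h1 h2 (h1(x := h1 rlo, rlo := h1 x)) (h2(x := h2 rlo, rlo := h2 x))"
proof -
  have c1: "csum a (h1(x := h1 rlo, rlo := h1 x)) R - csum a h1 R = a x clo + a rlo c - a x c - a rlo clo"
    using swap_cost[OF A(3,8,11) A(14), of a h1] by (simp add: A)
  have c2: "csum b (h2(x := h2 rlo, rlo := h2 x)) R - csum b h2 R = b x chi + b rlo c - b x c - b rlo chi"
    using swap_cost[OF A(3,8,11) A(14), of b h2] by (simp add: A)
  have "a x clo + a rlo c \<le> a x c + a rlo clo" using mgA[of x rlo clo c] inU assms by auto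
  moreover have "b x c + b rlo chi \<ge> b x chi + b rlo c" using amgA[of x rlo c chi] inU assms by auto
  ultimately show ?thesis
    by (intro K1resI[where y=rlo and d=c and ua=x and va=rhi and uc=clo and vc=chi])
      (use swap_bij[OF A(6,8,11)] swap_bij[OF A(7,8,11)] c1 c2 A assms cC in auto)
qed


lemma K1_HM: assumes "rhi < x" "clo < c" "c < chi"
  shows "K1res a b R C h1 h2 (h1(x := h1 rhi, rhi := h1 x)) (h2(x := h2 rhi, rhi := h2 x))"
proof -
  have c1: "csum a (h1(x := h1 rhi, rhi := h1 x)) R - csum a h1 R = a x chi + a rhi c - a x c - a rhi chi"
    using swap_cost[OF A(3,8,12) A(15), of a h1] by (simp add: A)
  have c2: "csum b (h2(x := h2 rhi, rhi := h2 x)) R - csum b h2 R = b x clo + b rhi c - b x c - b rhi clo"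
    using swap_cost[OF A(3,8,12) A(15), of b h2] by (simp add: A)
  have "a rhi c + a x chi \<le> a rhi chi + a x c" using mgA[of rhi x c chi] inU assms by auto
  moreover have "b rhi clo + b x c \<ge> b rhi c + b x clo" using amgA[of rhi x clo c] inU assms by auto
  ultimately show ?thesis
    by (intro K1resI[where y=rhi and d=c and ua=rlo and va=x and uc=clo and vc=chi])
      (use swap_bij[OF A(6,8,12)] swap_bij[OF A(7,8,12)] c1 c2 A assms cC in auto)
qed

lemma K1_ML: assumes "rlo < x" "x < rhi" "c < clo"
  shows "K1res a b R C h1 h2 (h1(x := h1 rlo, rlo := h1 x)) (h2(x := h2 rhi, rhi := h2 x))"
proof -
  have c1: "csum a (h1(x := h1 rlo, rlo := h1 x)) R - csum a h1 R = a x clo + a rlo c - a x c - a rlo clo"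
    using swap_cost[OF A(3,8,11) A(14), of a h1] by (simp add: A)
  have c2: "csum b (h2(x := h2 rhi, rhi := h2 x)) R - csum b h2 R = b x clo + b rhi c - b x c - b rhi clo"
    using swap_cost[OF A(3,8,12) A(15), of b h2] by (simp add: A)
  have "a rlo c + a x clo \<le> a rlo clo + a x c" using mgA[of rlo x c clo] inU assms by auto
  moreover have "b x c + b rhi clo \<ge> b x clo + b rhi c" using amgA[of x rhi c clo] inU assms by auto
  ultimately show ?thesis
    by (intro K1resI[where y=x and d=clo and ua=rlo and va=rhi and uc=c and vc=chi])
      (use swap_bij[OF A(6,8,11)] swap_bij[OF A(7,8,12)] c1 c2 A assms cC in auto)
qed

lemma K1_MH: assumes "rlo < x" "x < rhi" "chi < c"
  shows "K1res a b R C h1 h2 (h1(x := h1 rhi, rhi := h1 x)) (h2(x := h2 rlo, rlo := h2 x))"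
proof -
  have c1: "csum a (h1(x := h1 rhi, rhi := h1 x)) R - csum a h1 R = a x chi + a rhi c - a x c - a rhi chi"
    using swap_cost[OF A(3,8,12) A(15), of a h1] by (simp add: A)
  have c2: "csum b (h2(x := h2 rlo, rlo := h2 x)) R - csum b h2 R = b x chi + b rlo c - b x c - b rlo chi"
    using swap_cost[OF A(3,8,11) A(14), of b h2] by (simp add: A)
  have "a x chi + a rhi c \<le> a x c + a rhi chi" using mgA[of x rhi chi c] inU assms by auto
  moreover have "b rlo chi + b x c \<ge> b rlo c + b x chi" using amgA[of rlo x chi c] inU assms by auto
  ultimately show ?thesis
    by (intro K1resI[where y=x and d=chi and ua=rlo and va=rhi and uc=clo and vc=c])
      (use swap_bij[OF A(6,8,12)] swap_bij[OF A(7,8,11)] c1 c2 A assms cC in auto)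
qed

lemma K1_LL: assumes "x < rlo" "c < clo"
  shows "K1res a b R C h1 h2 h1 (h2(x := h2 rlo, rlo := h2 rhi, rhi := h2 x))"
proof -
  have ne: "rlo \<noteq> rhi" using A(13) by simp
  have c2: "csum b (h2(x := h2 rlo, rlo := h2 rhi, rhi := h2 x)) R - csum b h2 R =
      b x chi + b rlo clo + b rhi c - b x c - b rlo chi - b rhi clo"
    using cyc3_cost[OF A(3,8,11,12) A(14) ne A(15), of b h2] by (simp add: A)
  have "b x c + b rhi clo \<ge> b x clo + b rhi c" using amgA[of x rhi c clo] inU assms A(13) by auto
  moreover have "b x clo + b rlo chi \<ge> b x chi + b rlo clo" using amgA[of x rlo clo chi] inU assms A(18) by auto
  ultimately show ?thesis
    by (intro K1resI[where y=rlo and d=clo and ua=x and va=rhi and uc=c and vc=chi])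
      (use cyc3_bij[OF A(7,8,11,12) A(14) ne A(15)] c2 A assms cC in auto)
qed

lemma K1_LH: assumes "x < rlo" "chi < c"
  shows "K1res a b R C h1 h2 (h1(x := h1 rlo, rlo := h1 rhi, rhi := h1 x)) h2"
proof -
  have ne: "rlo \<noteq> rhi" using A(13) by simp
  have c1: "csum a (h1(x := h1 rlo, rlo := h1 rhi, rhi := h1 x)) R - csum a h1 R =
      a x clo + a rlo chi + a rhi c - a x c - a rlo clo - a rhi chi"
    using cyc3_cost[OF A(3,8,11,12) A(14) ne A(15), of a h1] by (simp add: A)
  have "a x chi + a rhi c \<le> a x c + a rhi chi" using mgA[of x rhi chi c] inU assms A(13) by auto
  moreover have "a x clo + a rlo chi \<le> a x chi + a rlo clo" using mgA[of x rlo clo chi] inU assms A(18) by auto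
  ultimately show ?thesis
    by (intro K1resI[where y=rlo and d=chi and ua=x and va=rhi and uc=clo and vc=c])
      (use cyc3_bij[OF A(6,8,11,12) A(14) ne A(15)] c1 A assms cC in auto)
qed

lemma K1_HL: assumes "rhi < x" "c < clo"
  shows "K1res a b R C h1 h2 (h1(x := h1 rhi, rhi := h1 rlo, rlo := h1 x)) h2"
proof -
  have ne: "rhi \<noteq> rlo" using A(13) by simp
  have c1: "csum a (h1(x := h1 rhi, rhi := h1 rlo, rlo := h1 x)) R - csum a h1 R =
      a x chi + a rhi clo + a rlo c - a x c - a rhi chi - a rlo clo"
    using cyc3_cost[OF A(3,8,12,11) A(15) ne A(14), of a h1] by (simp add: A)
  have "a rlo c + a x clo \<le> a rlo clo + a x c" using mgA[of rlo x c clo] inU assms A(13) by auto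
  moreover have "a rhi clo + a x chi \<le> a rhi chi + a x clo" using mgA[of rhi x clo chi] inU assms A(18) by auto
  ultimately show ?thesis
    by (intro K1resI[where y=rhi and d=clo and ua=rlo and va=x and uc=c and vc=chi])
      (use cyc3_bij[OF A(6,8,12,11) A(15) ne A(14)] c1 A assms cC in auto)
qed

lemma K1_HH: assumes "rhi < x" "chi < c"
  shows "K1res a b R C h1 h2 h1 (h2(x := h2 rhi, rhi := h2 rlo, rlo := h2 x))"
proof -
  have ne: "rhi \<noteq> rlo" using A(13) by simp
  have c2: "csum b (h2(x := h2 rhi, rhi := h2 rlo, rlo := h2 x)) R - csum b h2 R =
      b x clo + b rhi chi + b rlo c - b x c - b rhi clo - b rlo chi"
    using cyc3_cost[OF A(3,8,12,11) A(15) ne A(14), of b h2] by (simp add: A)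
  have "b rlo chi + b x c \<ge> b rlo c + b x chi" using amgA[of rlo x chi c] inU assms A(13) by auto
  moreover have "b rhi clo + b x chi \<ge> b rhi chi + b x clo" using amgA[of rhi x clo chi] inU assms A(18) by auto
  ultimately show ?thesis
    by (intro K1resI[where y=rhi and d=chi and ua=rlo and va=x and uc=clo and vc=c])
      (use cyc3_bij[OF A(7,8,12,11) A(15) ne A(14)] c2 A assms cC in auto)
qed

lemma K1_core: "\<exists>g1 g2. K1res a b R C h1 h2 g1 g2"
proof -
  have r: "x < rlo \<or> rhi < x \<or> (rlo < x \<and> x < rhi)" and cc: "c < clo \<or> chi < c \<or> (clo < c \<and> c < chi)"
    using A(13-15,18-20) by linarith+
  then show ?thesis using K1_MM K1_LM K1_HM K1_ML K1_MH K1_LL K1_LH K1_HL K1_HH by blast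
qed
end

lemma bij_remove1:
  assumes "bij_betw f R C" "x \<in> R" "f x = c"
  shows "bij_betw f (R - {x}) (C - {c})"
proof -
  have i: "inj_on f R" "f ` R = C" using assms(1) by (auto simp: bij_betw_def)
  have "f ` (R - {x}) = f ` R - f ` {x}" by (rule inj_on_image_set_diff[OF i(1)]) (use assms in auto)
  then show ?thesis using i assms by (auto simp: bij_betw_def inj_on_diff)
qed

lemma card2_lohi:
  fixes R0 :: "nat set"
  assumes "finite R0" "2 \<le> card R0"
  shows "Min R0 \<in> R0" "Max R0 \<in> R0" "Min R0 < Max R0" "\<forall>i\<in>R0. Min R0 \<le> i \<and> i \<le> Max R0"
proof -
  have ne: "R0 \<noteq> {}" using assms by auto
  show "Min R0 \<in> R0" "Max R0 \<in> R0" using ne assms by auto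
  show "\<forall>i\<in>R0. Min R0 \<le> i \<and> i \<le> Max R0" using assms by auto
  have "\<not> card R0 \<le> Suc 0" using assms(2) by simp
  then obtain p q where pq: "p \<in> R0" "q \<in> R0" "p \<noteq> q"
    using card_le_Suc0_iff_eq[OF assms(1)] by blast
  have "Min R0 \<le> min p q" using pq assms(1) by simp
  moreover have "max p q \<le> Max R0" using pq assms(1) by simp
  moreover have "min p q < max p q" using pq by linarith
  ultimately show "Min R0 < Max R0" by linarith
qed

lemma K1:
  assumes "mg U a" "amg U b" "finite R" "R \<subseteq> U" "C \<subseteq> U" "bij_betw f1 R C" "bij_betw f2 R C"
    "x \<in> R" "f1 x = c" "f2 x = c" "3 \<le> card R"
  shows "\<exists>g1 g2. K1res a b R C f1 f2 g1 g2"
proof -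
  define R0 where "R0 = R - {x}"
  define C0 where "C0 = C - {c}"
  have b1: "bij_betw f1 R0 C0" and b2: "bij_betw f2 R0 C0"
    using bij_remove1[OF assms(6,8,9)] bij_remove1[OF assms(7,8,10)] unfolding R0_def C0_def by auto
  have fR0: "finite R0" using assms(3) R0_def by auto
  have cR0: "2 \<le> card R0" using assms(3,8,11) R0_def by auto
  have fC0: "finite C0" using b1 fR0 bij_betw_finite by blast
  have cC0: "2 \<le> card C0" using b1 cR0 bij_betw_same_card by metis
  note LR = card2_lohi[OF fR0 cR0] and LC = card2_lohi[OF fC0 cC0]
  have sub: "R0 \<subseteq> U" "C0 \<subseteq> U" using assms R0_def C0_def by auto
  obtain h1 where h1: "bij_betw h1 R0 C0" "\<forall>i. i \<notin> R0 \<longrightarrow> h1 i = f1 i" "h1 (Min R0) = Min C0"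
      "h1 (Max R0) = Max C0" "csum a h1 R0 \<le> csum a f1 R0"
    using norm_mg[OF assms(1) fR0 sub b1 LR LC] by blast
  obtain h2 where h2: "bij_betw h2 R0 C0" "\<forall>i. i \<notin> R0 \<longrightarrow> h2 i = f2 i" "h2 (Min R0) = Max C0"
      "h2 (Max R0) = Min C0" "csum b h2 R0 \<le> csum b f2 R0"
    using norm_amg[OF assms(2) fR0 sub b2 LR LC] by blast
  have RR0: "R0 \<subseteq> R" using R0_def by auto
  have f1R0: "f1 ` R0 = C0" "f2 ` R0 = C0" using b1 b2 by (auto simp: bij_betw_def)
  have H1: "bij_betw h1 R C" using patch_bij[OF assms(6) RR0] h1(1,2) f1R0 by auto
  have H2: "bij_betw h2 R C" using patch_bij[OF assms(7) RR0] h2(1,2) f1R0 by auto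
  have s1: "csum a h1 R \<le> csum a f1 R" using patch_sum[OF assms(3) RR0, of h1 f1 a] h1 by auto
  have s2: "csum b h2 R \<le> csum b f2 R" using patch_sum[OF assms(3) RR0, of h2 f2 b] h2 by auto
  have xR0: "x \<notin> R0" using R0_def by auto
  have hx: "h1 x = c" "h2 x = c" using h1(2) h2(2) xR0 assms by auto
  have "Min R0 \<noteq> x" "Max R0 \<noteq> x" "Min C0 \<noteq> c" "Max C0 \<noteq> c"
    using LR LC R0_def C0_def by auto
  moreover have "Min R0 \<in> R" "Max R0 \<in> R" "Min C0 \<in> C" "Max C0 \<in> C" using LR LC RR0 C0_def by auto
  ultimately obtain g1 g2 where g: "K1res a b R C h1 h2 g1 g2"
    using K1_core[OF assms(1,2,3,4,5) H1 H2 assms(8) hx, of "Min R0" "Max R0" "Min C0" "Max C0"]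
      LR LC h1 h2 by blast
  have "\<forall>i. i \<notin> R \<longrightarrow> h1 i = f1 i \<and> h2 i = f2 i" using h1(2) h2(2) RR0 by auto
  then show ?thesis using g s1 s2 unfolding K1res_def by (smt (verit))
qed

definition agree :: "(nat \<Rightarrow> nat) \<Rightarrow> (nat \<Rightarrow> nat) \<Rightarrow> nat set \<Rightarrow> nat set" where
  "agree f1 f2 S = {i\<in>S. f1 i = f2 i}"

definition gset :: "nat \<Rightarrow> nat \<Rightarrow> (nat \<Rightarrow> nat) \<Rightarrow> (nat \<Rightarrow> nat) \<Rightarrow> nat set" where
  "gset s t f1 f2 = {i\<in>{s..t}. f1 i = f2 i \<and> i \<noteq> s \<and> i \<noteq> t \<and> f1 i \<noteq> s \<and> f1 i \<noteq> t}"

definition PeelRes where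
  "PeelRes a b s t k f1 f2 \<longleftrightarrow> (\<exists>g1 g2. bij_betw g1 {s..t} {s..t} \<and> bij_betw g2 {s..t} {s..t} \<and>
     k \<le> card (agree g1 g2 {s..t}) \<and> g1 s = s \<and> g1 t = t \<and> g2 s = t \<and> g2 t = s \<and>
     csum a g1 {s..t} + csum b g2 {s..t} \<le> csum a f1 {s..t} + csum b f2 {s..t})"

lemma peel_direct:
  assumes mg: "mg U a" and amg: "amg U b" and SU: "{s..t} \<subseteq> U" and st: "s < t"
    and b1: "bij_betw f1 {s..t} {s..t}" and b2: "bij_betw f2 {s..t} {s..t}"
    and E: "E \<subseteq> gset s t f1 f2" "card E = k" and kS: "k + 2 \<le> card {s..t}"
  shows "PeelRes a b s t k f1 f2"
proof -
  define S where "S = {s..t}"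
  define R where "R = S - E"
  define C where "C = S - f1 ` E"
  have ES: "E \<subseteq> S" using E(1) unfolding gset_def S_def by auto
  have fE: "finite E" using ES S_def finite_subset by blast
  have agE: "\<forall>i\<in>E. f1 i = f2 i \<and> i \<noteq> s \<and> i \<noteq> t \<and> f1 i \<noteq> s \<and> f1 i \<noteq> t"
    using E(1) unfolding gset_def by auto
  have inj1: "inj_on f1 S" and inj2: "inj_on f2 S" using b1 b2 S_def by (auto simp: bij_betw_def)
  have im: "f1 ` S = S" "f2 ` S = S" using b1 b2 S_def by (auto simp: bij_betw_def)
  have e12: "f2 ` E = f1 ` E" using agE by (auto simp: image_def)
  have bE1: "bij_betw f1 E (f1 ` E)" using inj1 ES by (auto simp: bij_betw_def intro: inj_on_subset)
  have bE2: "bij_betw f2 E (f1 ` E)" using inj2 ES e12 by (auto simp: bij_betw_def intro: inj_on_subset)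
  have f1E: "f1 ` E \<subseteq> S" using ES im by auto
  have bR1: "bij_betw f1 R C" unfolding R_def C_def using bij_betw_DiffI[OF b1[folded S_def] bE1 ES f1E] .
  have bR2: "bij_betw f2 R C" unfolding R_def C_def using bij_betw_DiffI[OF b2[folded S_def] bE2 ES f1E] .
  have fR: "finite R" unfolding R_def S_def by auto
  have RS: "R \<subseteq> S" "C \<subseteq> S" unfolding R_def C_def by auto
  have RU: "R \<subseteq> U" "C \<subseteq> U" using RS SU S_def by auto
  have sR: "s \<in> R" "t \<in> R" using st agE unfolding R_def S_def by auto
  have sC: "s \<in> C" "t \<in> C" using st agE unfolding C_def S_def by auto
  have bdR: "\<forall>i\<in>R. s \<le> i \<and> i \<le> t" "\<forall>i\<in>C. s \<le> i \<and> i \<le> t" using RS S_def by auto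
  obtain g1 where g1: "bij_betw g1 R C" "\<forall>i. i \<notin> R \<longrightarrow> g1 i = f1 i" "g1 s = s" "g1 t = t" "csum a g1 R \<le> csum a f1 R"
    using norm_mg[OF mg fR RU bR1 sR st bdR(1) sC st bdR(2)] by blast
  obtain g2 where g2: "bij_betw g2 R C" "\<forall>i. i \<notin> R \<longrightarrow> g2 i = f2 i" "g2 s = t" "g2 t = s" "csum b g2 R \<le> csum b f2 R"
    using norm_amg[OF amg fR RU bR2 sR st bdR(1) sC st bdR(2)] by blast
  have iR: "f1 ` R = C" "f2 ` R = C" using bR1 bR2 by (auto simp: bij_betw_def)
  have G1: "bij_betw g1 S S" using patch_bij[OF b1[folded S_def] RS(1)] g1(1,2) iR by auto
  have G2: "bij_betw g2 S S" using patch_bij[OF b2[folded S_def] RS(1)] g2(1,2) iR by auto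
  have fS: "finite S" using S_def by auto
  have cs1: "csum a g1 S \<le> csum a f1 S" using patch_sum[OF fS RS(1), of g1 f1 a] g1 by auto
  have cs2: "csum b g2 S \<le> csum b f2 S" using patch_sum[OF fS RS(1), of g2 f2 b] g2 by auto
  have "E \<subseteq> agree g1 g2 S" using ES agE g1(2) g2(2) unfolding agree_def R_def by auto
  moreover have "finite (agree g1 g2 S)" unfolding agree_def using fS by auto
  ultimately have "k \<le> card (agree g1 g2 S)" using E(2) card_mono by metis
  then show ?thesis unfolding PeelRes_def using G1 G2 g1 g2 cs1 cs2 S_def by (intro exI[of _ g1] exI[of _ g2]) auto
qed


lemma peel_step:
  assumes mg: "mg U a" and amg: "amg U b" and SU: "{s..t} \<subseteq> U" and st: "s < t"
    and b1: "bij_betw f1 {s..t} {s..t}" and b2: "bij_betw f2 {s..t} {s..t}"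
    and gk: "card (gset s t f1 f2) < k" and ak: "k \<le> card (agree f1 f2 {s..t})" and kS: "k + 2 \<le> card {s..t}"
  shows "\<exists>h1 h2. bij_betw h1 {s..t} {s..t} \<and> bij_betw h2 {s..t} {s..t} \<and> k \<le> card (agree h1 h2 {s..t}) \<and>
     card (gset s t f1 f2) < card (gset s t h1 h2) \<and>
     csum a h1 {s..t} + csum b h2 {s..t} \<le> csum a f1 {s..t} + csum b f2 {s..t}"
proof -
  define S where "S = {s..t}"
  define G where "G = gset s t f1 f2"
  define A where "A = agree f1 f2 S"
  have fS: "finite S" using S_def by auto
  have GA: "G \<subseteq> A" unfolding G_def A_def gset_def agree_def S_def by auto
  have fA: "finite A" unfolding A_def agree_def using fS by auto
  have fG: "finite G" using GA fA finite_subset by blast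
  obtain x where x: "x \<in> A" "x \<notin> G"
  proof -
    have "\<not> A \<subseteq> G"
    proof
      assume "A \<subseteq> G"
      then have "card A \<le> card G" using fG card_mono by blast
      then show False using gk ak by (simp add: G_def A_def S_def)
    qed
    then show ?thesis using that by blast
  qed
  have "card (insert x G) \<le> k" using x(2) fG gk G_def by simp
  moreover have "insert x G \<subseteq> A" using x GA by auto
  ultimately obtain E where E: "insert x G \<subseteq> E" "E \<subseteq> A" "card E = k"
    using exists_subset_between[of "insert x G" k A] fA ak A_def S_def by auto
  have ES: "E \<subseteq> S" using E(2) unfolding A_def agree_def by auto
  have fE: "finite E" using ES fS finite_subset by blast
  have agE: "\<forall>i\<in>E. f1 i = f2 i" using E(2) unfolding A_def agree_def by auto
  define R where "R = S - (E - {x})"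
  define C where "C = f1 ` R"
  have xE: "x \<in> E" using E(1) by auto
  have xR: "x \<in> R" using xE ES R_def by auto
  have RS: "R \<subseteq> S" using R_def by auto
  have inj1: "inj_on f1 S" and inj2: "inj_on f2 S" using b1 b2 S_def by (auto simp: bij_betw_def)
  have im: "f1 ` S = S" "f2 ` S = S" using b1 b2 S_def by (auto simp: bij_betw_def)
  have CS: "C \<subseteq> S" using RS im C_def by auto
  have bR1: "bij_betw f1 R C" unfolding C_def using inj1 RS by (auto simp: bij_betw_def intro: inj_on_subset)
  have "f2 ` R = f2 ` S - f2 ` (E - {x})" unfolding R_def by (rule inj_on_image_set_diff[OF inj2]) (use ES in auto)
  also have "f2 ` (E - {x}) = f1 ` (E - {x})" using agE by (auto simp: image_def)
  also have "f2 ` S = f1 ` S" using im by simp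
  also have "f1 ` S - f1 ` (E - {x}) = f1 ` R" unfolding R_def by (rule inj_on_image_set_diff[OF inj1, symmetric]) (use ES in auto)
  finally have f2R: "f2 ` R = C" using C_def by simp
  have bR2: "bij_betw f2 R C" using inj2 RS f2R by (auto simp: bij_betw_def intro: inj_on_subset)
  have cEx: "card (E - {x}) = k - 1" using xE fE E(3) by simp
  have k1: "1 \<le> k" using card_gt_0_iff[of E] E(3) xE fE by auto
  have "card R = card S - (k - 1)" unfolding R_def using card_Diff_subset[of "E - {x}" S] ES fE cEx by auto
  then have cR: "3 \<le> card R" using kS S_def k1 by auto
  have fR: "finite R" using fS RS finite_subset by blast
  have RU: "R \<subseteq> U" "C \<subseteq> U" using RS CS SU S_def by auto
  have f2x: "f2 x = f1 x" using agE xE by auto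
  obtain g1 g2 where K: "K1res a b R C f1 f2 g1 g2"
    using K1[OF mg amg fR RU bR1 bR2 xR refl f2x cR] by blast
  then have gb: "bij_betw g1 R C" "bij_betw g2 R C" and gout: "\<forall>i. i \<notin> R \<longrightarrow> g1 i = f1 i \<and> g2 i = f2 i"
    and gc: "csum a g1 R + csum b g2 R \<le> csum a f1 R + csum b f2 R"
    unfolding K1res_def by auto
  obtain y where y: "y \<in> R" "g1 y = g2 y" "\<exists>u\<in>R. u < y" "\<exists>v\<in>R. y < v" "\<exists>u\<in>C. u < g1 y" "\<exists>v\<in>C. g1 y < v"
    using K unfolding K1res_def by blast
  have H1: "bij_betw g1 S S" using patch_bij[OF b1[folded S_def] RS] gb(1) gout C_def by auto
  have H2: "bij_betw g2 S S" using patch_bij[OF b2[folded S_def] RS] gb(2) gout f2R by auto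
  have cs1: "csum a g1 S = csum a f1 S - csum a f1 R + csum a g1 R" using patch_sum[OF fS RS, of g1 f1 a] gout by auto
  have cs2: "csum b g2 S = csum b f2 S - csum b f2 R + csum b g2 R" using patch_sum[OF fS RS, of g2 f2 b] gout by auto
  have yE: "y \<notin> E - {x}" using y(1) R_def by auto
  have yS: "y \<in> S" using y(1) RS by auto
  have g1yS: "g1 y \<in> S" using y(1) gb(1) CS by (auto simp: bij_betw_def)
  have Sb: "\<forall>i\<in>S. s \<le> i \<and> i \<le> t" using S_def by auto
  have ygood: "y \<noteq> s \<and> y \<noteq> t \<and> g1 y \<noteq> s \<and> g1 y \<noteq> t"
  proof -
    obtain u where "u \<in> R" "u < y" using y(3) by blast
    then have "y \<noteq> s" using RS Sb by force
    moreover obtain v where "v \<in> R" "y < v" using y(4) by blast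
    then have "y \<noteq> t" using RS Sb by force
    moreover obtain u' where "u' \<in> C" "u' < g1 y" using y(5) by blast
    then have "g1 y \<noteq> s" using CS Sb by force
    moreover obtain v' where "v' \<in> C" "g1 y < v'" using y(6) by blast
    then have "g1 y \<noteq> t" using CS Sb by force
    ultimately show ?thesis by blast
  qed
  have ag: "insert y (E - {x}) \<subseteq> agree g1 g2 S"
    using y(2) yS ES agE gout unfolding agree_def R_def by auto
  have fag: "finite (agree g1 g2 S)" unfolding agree_def using fS by auto
  have "card (insert y (E - {x})) = k" using yE cEx fE k1 by simp
  then have K2: "k \<le> card (agree g1 g2 S)" using card_mono[OF fag ag] by simp
  have GE: "G \<subseteq> E - {x}" using E(1) x(2) by auto
  have "insert y G \<subseteq> gset s t g1 g2"
  proof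
    fix i assume "i \<in> insert y G"
    then show "i \<in> gset s t g1 g2"
    proof
      assume "i = y" then show ?thesis using ygood yS y(2) S_def unfolding gset_def by auto
    next
      assume iG: "i \<in> G"
      then have "i \<notin> R" using GE R_def by auto
      then show ?thesis using iG gout unfolding G_def gset_def by auto
    qed
  qed
  moreover have "finite (gset s t g1 g2)" unfolding gset_def by auto
  ultimately have "card (insert y G) \<le> card (gset s t g1 g2)" using card_mono by blast
  moreover have "y \<notin> G" using yE GE by auto
  ultimately have K3: "card G < card (gset s t g1 g2)" using fG by simp
  show ?thesis
    using H1 H2 K2 K3 cs1 cs2 gc S_def G_def by (intro exI[of _ g1] exI[of _ g2]) auto
qed

lemma peel_base:
  assumes mg: "mg U a" and amg: "amg U b" and SU: "{s..t} \<subseteq> U" and st: "s < t"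
    and b1: "bij_betw f1 {s..t} {s..t}" and b2: "bij_betw f2 {s..t} {s..t}"
    and kS: "k + 2 \<le> card {s..t}" and gk: "k \<le> card (gset s t f1 f2)"
  shows "PeelRes a b s t k f1 f2"
proof -
  have "finite (gset s t f1 f2)" unfolding gset_def by auto
  then obtain E where "E \<subseteq> gset s t f1 f2" "card E = k"
    using exists_subset_between[of "{}" k "gset s t f1 f2"] gk by auto
  then show ?thesis using peel_direct[OF mg amg SU st b1 b2 _ _ kS] by blast
qed

lemma PeelRes_trans:
  assumes "PeelRes a b s t k h1 h2"
    "csum a h1 {s..t} + csum b h2 {s..t} \<le> csum a f1 {s..t} + csum b f2 {s..t}"
  shows "PeelRes a b s t k f1 f2"
proof -
  obtain g1 g2 where g: "bij_betw g1 {s..t} {s..t}" "bij_betw g2 {s..t} {s..t}"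
     "k \<le> card (agree g1 g2 {s..t})" "g1 s = s" "g1 t = t" "g2 s = t" "g2 t = s"
     "csum a g1 {s..t} + csum b g2 {s..t} \<le> csum a h1 {s..t} + csum b h2 {s..t}"
    using assms(1) unfolding PeelRes_def by blast
  show ?thesis unfolding PeelRes_def
    by (rule exI[of _ g1], rule exI[of _ g2]) (use g assms(2) in auto)
qed

lemma peel_ind:
  assumes mg: "mg U a" and amg: "amg U b" and SU: "{s..t} \<subseteq> U" and st: "s < t"
    and kS: "k + 2 \<le> card {s..t}"
  shows "\<forall>f1 f2. bij_betw f1 {s..t} {s..t} \<longrightarrow> bij_betw f2 {s..t} {s..t} \<longrightarrow>
     k \<le> card (agree f1 f2 {s..t}) \<longrightarrow> k \<le> card (gset s t f1 f2) + d \<longrightarrow> PeelRes a b s t k f1 f2"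
proof (induction d)
  case 0
  then show ?case using peel_base[OF mg amg SU st _ _ kS] by auto
next
  case (Suc d)
  show ?case
  proof (intro allI impI)
    fix f1 f2 assume b1: "bij_betw f1 {s..t} {s..t}" and b2: "bij_betw f2 {s..t} {s..t}"
      and ak: "k \<le> card (agree f1 f2 {s..t})" and gd: "k \<le> card (gset s t f1 f2) + Suc d"
    show "PeelRes a b s t k f1 f2"
    proof (cases "k \<le> card (gset s t f1 f2)")
      case True
      then show ?thesis using peel_base[OF mg amg SU st b1 b2 kS] by blast
    next
      case False
      then obtain h1 h2 where h: "bij_betw h1 {s..t} {s..t}" "bij_betw h2 {s..t} {s..t}"
        "k \<le> card (agree h1 h2 {s..t})" "card (gset s t f1 f2) < card (gset s t h1 h2)"
        "csum a h1 {s..t} + csum b h2 {s..t} \<le> csum a f1 {s..t} + csum b f2 {s..t}"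
        using peel_step[OF mg amg SU st b1 b2 _ ak kS] by auto
      have "k \<le> card (gset s t h1 h2) + d" using h(4) gd by linarith
      then have "PeelRes a b s t k h1 h2" using Suc.IH h(1-3) by blast
      then show ?thesis using PeelRes_trans h(5) by blast
    qed
  qed
qed

lemma peel:
  assumes "mg U a" "amg U b" "{s..t} \<subseteq> U" "s < t" "k + 2 \<le> card {s..t}"
    "bij_betw f1 {s..t} {s..t}" "bij_betw f2 {s..t} {s..t}" "k \<le> card (agree f1 f2 {s..t})"
  shows "PeelRes a b s t k f1 f2"
  using peel_ind[OF assms(1-5), of k] assms(6-8) by auto

definition tau1 :: "nat set \<Rightarrow> (nat \<Rightarrow> nat) \<Rightarrow> nat \<Rightarrow> nat" where
  "tau1 J P = (\<lambda>i. if i \<in> J then P i else i)"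

definition tau2 :: "nat \<Rightarrow> nat \<Rightarrow> nat set \<Rightarrow> (nat \<Rightarrow> nat) \<Rightarrow> nat \<Rightarrow> nat" where
  "tau2 s t J P = (\<lambda>i. if i \<in> J then P i else s + t - i)"

lemma agree_all:
  assumes "finite S" "bij_betw f1 S S" "bij_betw f2 S S" "card S \<le> card (agree f1 f2 S) + 1"
  shows "\<forall>i\<in>S. f1 i = f2 i"
proof (rule ccontr)
  assume "\<not> (\<forall>i\<in>S. f1 i = f2 i)"
  then obtain i where i: "i \<in> S" "f1 i \<noteq> f2 i" by blast
  have sub: "agree f1 f2 S \<subseteq> S - {i}" using i unfolding agree_def by auto
  have "card (S - {i}) = card S - 1" using i assms(1) by simp
  moreover have "card (agree f1 f2 S) \<le> card (S - {i})" using card_mono[OF _ sub] assms(1) by auto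
  ultimately have "card (agree f1 f2 S) = card (S - {i})" using assms(4) i(1) assms(1)
    by (metis Suc_diff_1 add.commute card_gt_0_iff empty_iff le_antisym plus_1_eq_Suc not_less_eq_eq)
  then have eq: "agree f1 f2 S = S - {i}" using card_subset_eq[OF _ sub] assms(1) by auto
  have "f1 i \<in> f2 ` S" using assms(2,3) i(1) by (auto simp: bij_betw_def)
  then obtain j where j: "j \<in> S" "f2 j = f1 i" by auto
  have "j \<noteq> i" using j i by auto
  then have "f1 j = f2 j" using eq j(1) unfolding agree_def by auto
  then have "f1 j = f1 i" using j by simp
  then have "j = i" using assms(2) i(1) j(1) by (auto simp: bij_betw_def inj_on_def)
  then show False using \<open>j \<noteq> i\<close> by simp
qed

lemma csum_split2:
  assumes "s < t"
  shows "csum a f {s..t} = a s (f s) + a t (f t) + csum a f ({s..t} - {s,t})"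
proof -
  have "csum a f {s..t} = csum a f ({s..t} - {s,t}) + csum a f {s,t}"
    unfolding csum_def by (rule sum.subset_diff) (use assms in auto)
  then show ?thesis using assms by (simp add: csum_def)
qed

lemma inner_eq: "s < t \<Longrightarrow> {s..t} - {s,t} = {Suc s..t - 1}" by auto

lemma LB:
  assumes mg: "mg U a" and amg: "amg U b"
  shows "\<forall>s t f1 f2. (t + 1 - s - k) div 2 = m \<longrightarrow> k \<le> t + 1 - s \<longrightarrow> {s..t} \<subseteq> U \<longrightarrow>
     bij_betw f1 {s..t} {s..t} \<longrightarrow> bij_betw f2 {s..t} {s..t} \<longrightarrow> k \<le> card (agree f1 f2 {s..t}) \<longrightarrow>
     (\<exists>P. bij_betw P {s+m..t-m} {s+m..t-m} \<and>
        csum a (tau1 {s+m..t-m} P) {s..t} + csum b (tau2 s t {s+m..t-m} P) {s..t}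
          \<le> csum a f1 {s..t} + csum b f2 {s..t})"
proof (induction m)
  case 0
  show ?case
  proof (intro allI impI)
    fix s t f1 f2
    assume m: "(t + 1 - s - k) div 2 = 0" and kk: "k \<le> t + 1 - s" and SU: "{s..t} \<subseteq> U"
      and b1: "bij_betw f1 {s..t} {s..t}" and b2: "bij_betw f2 {s..t} {s..t}" and ak: "k \<le> card (agree f1 f2 {s..t})"
    have "card {s..t} \<le> card (agree f1 f2 {s..t}) + 1" using m kk ak by auto
    then have eq: "\<forall>i\<in>{s..t}. f1 i = f2 i" using agree_all[OF _ b1 b2] by auto
    have "csum a (tau1 {s..t} f1) {s..t} = csum a f1 {s..t}"
      unfolding csum_def tau1_def by (rule sum.cong) auto
    moreover have "csum b (tau2 s t {s..t} f1) {s..t} = csum b f2 {s..t}"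
      unfolding csum_def tau2_def using eq by (intro sum.cong) auto
    ultimately show "\<exists>P. bij_betw P {s+0..t-0} {s+0..t-0} \<and>
        csum a (tau1 {s+0..t-0} P) {s..t} + csum b (tau2 s t {s+0..t-0} P) {s..t}
          \<le> csum a f1 {s..t} + csum b f2 {s..t}"
      using b1 by (intro exI[of _ f1]) auto
  qed
next
  case (Suc m)
  show ?case
  proof (intro allI impI)
    fix s t f1 f2
    assume m: "(t + 1 - s - k) div 2 = Suc m" and kk: "k \<le> t + 1 - s" and SU: "{s..t} \<subseteq> U"
      and b1: "bij_betw f1 {s..t} {s..t}" and b2: "bij_betw f2 {s..t} {s..t}" and ak: "k \<le> card (agree f1 f2 {s..t})"
    have st: "s < t" using m kk by auto
    have kS: "k + 2 \<le> card {s..t}" using m kk by auto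
    obtain g1 g2 where g: "bij_betw g1 {s..t} {s..t}" "bij_betw g2 {s..t} {s..t}"
       "k \<le> card (agree g1 g2 {s..t})" "g1 s = s" "g1 t = t" "g2 s = t" "g2 t = s"
       "csum a g1 {s..t} + csum b g2 {s..t} \<le> csum a f1 {s..t} + csum b f2 {s..t}"
      using peel[OF mg amg SU st kS b1 b2 ak] unfolding PeelRes_def by blast
    define S' where "S' = {s..t} - {s,t}"
    have S'eq: "S' = {Suc s..t - 1}" using inner_eq[OF st] S'_def by simp
    have bst1: "bij_betw g1 {s,t} {s,t}" using g(4,5) st by (auto simp: bij_betw_def)
    have bst2: "bij_betw g2 {s,t} {s,t}" using g(6,7) st by (auto simp: bij_betw_def inj_on_def)
    have c1: "bij_betw g1 S' S'" unfolding S'_def by (rule bij_betw_DiffI[OF g(1) bst1]) (use st in auto)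
    have c2: "bij_betw g2 S' S'" unfolding S'_def by (rule bij_betw_DiffI[OF g(2) bst2]) (use st in auto)
    have "agree g1 g2 S' = agree g1 g2 {s..t}" unfolding agree_def S'_def using g(4-7) st by auto
    then have ak': "k \<le> card (agree g1 g2 S')" using g(3) by simp
    have m': "(t - 1 + 1 - Suc s - k) div 2 = m" using m st by auto
    have kk': "k \<le> t - 1 + 1 - Suc s" using m st by auto
    have "{Suc s..t - 1} \<subseteq> {s..t}" by auto
    then have SU': "{Suc s..t - 1} \<subseteq> U" using SU by blast
    obtain P where P: "bij_betw P {Suc s + m..t - 1 - m} {Suc s + m..t - 1 - m}"
      "csum a (tau1 {Suc s + m..t - 1 - m} P) {Suc s..t - 1} + csum b (tau2 (Suc s) (t - 1) {Suc s + m..t - 1 - m} P) {Suc s..t - 1}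
        \<le> csum a g1 {Suc s..t - 1} + csum b g2 {Suc s..t - 1}"
      using Suc.IH m' kk' SU' c1 c2 ak' S'eq by blast
    define J where "J = {s + Suc m..t - Suc m}"
    have Jeq: "{Suc s + m..t - 1 - m} = J" unfolding J_def by auto
    have t2: "tau2 (Suc s) (t - 1) J P = tau2 s t J P" unfolding tau2_def using st by auto
    have sJ: "s \<notin> J" "t \<notin> J" unfolding J_def using st by auto
    have e1: "csum a (tau1 J P) {s..t} = a s s + a t t + csum a (tau1 J P) S'"
      using csum_split2[OF st, of a "tau1 J P"] sJ S'_def by (simp add: tau1_def)
    have e2: "csum b (tau2 s t J P) {s..t} = b s t + b t s + csum b (tau2 s t J P) S'"
      using csum_split2[OF st, of b "tau2 s t J P"] sJ S'_def by (simp add: tau2_def)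
    have e3: "csum a g1 {s..t} = a s s + a t t + csum a g1 S'"
      using csum_split2[OF st, of a g1] g S'_def by simp
    have e4: "csum b g2 {s..t} = b s t + b t s + csum b g2 S'"
      using csum_split2[OF st, of b g2] g S'_def by simp
    have "csum a (tau1 J P) S' + csum b (tau2 s t J P) S' \<le> csum a g1 S' + csum b g2 S'"
      using P(2) Jeq t2 S'eq by simp
    then have "csum a (tau1 J P) {s..t} + csum b (tau2 s t J P) {s..t} \<le> csum a f1 {s..t} + csum b f2 {s..t}"
      using e1 e2 e3 e4 g(8) by linarith
    then show "\<exists>P. bij_betw P {s + Suc m..t - Suc m} {s + Suc m..t - Suc m} \<and>
        csum a (tau1 {s + Suc m..t - Suc m} P) {s..t} + csum b (tau2 s t {s + Suc m..t - Suc m} P) {s..t}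
          \<le> csum a f1 {s..t} + csum b f2 {s..t}"
      using P(1) Jeq J_def by (intro exI[of _ P]) auto
  qed
qed

definition graph :: "(nat \<Rightarrow> nat) \<Rightarrow> nat set \<Rightarrow> (nat \<times> nat) set" where
  "graph f S = (\<lambda>i. (i, f i)) ` S"

lemma pm_to_fun:
  assumes "perfect_matching_on S T M"
  shows "\<exists>f. bij_betw f S T \<and> M = graph f S"
proof -
  have sub: "M \<subseteq> S \<times> T" and r: "\<forall>i\<in>S. \<exists>!j. (i, j) \<in> M" and c: "\<forall>j\<in>T. \<exists>!i. (i, j) \<in> M"
    using assms unfolding perfect_matching_on_def by auto
  define f where "f i = (THE j. (i, j) \<in> M)" for i
  have fM: "(i, f i) \<in> M" if "i \<in> S" for i
    using r that unfolding f_def by (metis theI')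
  have fT: "f i \<in> T" if "i \<in> S" for i using fM[OF that] sub by auto
  have Mg: "M = graph f S"
  proof
    show "M \<subseteq> graph f S"
    proof
      fix p assume p: "p \<in> M"
      obtain i j where ij: "p = (i, j)" by (cases p)
      have iS: "i \<in> S" using p ij sub by auto
      have "j = f i" using r iS fM[OF iS] p ij by auto
      then show "p \<in> graph f S" using ij iS unfolding graph_def by auto
    qed
    show "graph f S \<subseteq> M" using fM unfolding graph_def by auto
  qed
  have inj: "inj_on f S"
  proof (rule inj_onI)
    fix i i' assume "i \<in> S" "i' \<in> S" "f i = f i'"
    then show "i = i'" using c fT fM by metis
  qed
  have "f ` S = T"
  proof
    show "f ` S \<subseteq> T" using fT by auto
    show "T \<subseteq> f ` S"
    proof
      fix j assume j: "j \<in> T"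
      then obtain i where i: "(i, j) \<in> M" using c by blast
      then have iS: "i \<in> S" using sub by auto
      then have "j = f i" using r fM[OF iS] i by auto
      then show "j \<in> f ` S" using iS by auto
    qed
  qed
  then show ?thesis using inj Mg by (auto simp: bij_betw_def)
qed

lemma fun_to_pm:
  assumes "bij_betw f S T"
  shows "perfect_matching_on S T (graph f S)"
  using assms unfolding perfect_matching_on_def graph_def bij_betw_def inj_on_def by auto

lemma cost_graph: "cost c (graph f S) = csum c f S"
proof -
  have "inj_on (\<lambda>i. (i, f i)) S" by (auto simp: inj_on_def)
  then show ?thesis unfolding cost_def graph_def csum_def by (simp add: sum.reindex)
qed

lemma graph_inter: "graph f1 S \<inter> graph f2 S = graph f1 (agree f1 f2 S)"
  unfolding graph_def agree_def by auto

lemma card_graph: "card (graph f S) = card S"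
  unfolding graph_def by (rule card_image) (auto simp: inj_on_def)

lemma card_inter: "card (graph f1 S \<inter> graph f2 S) = card (agree f1 f2 S)"
  using graph_inter card_graph by simp

lemma refl_bij:
  fixes m n :: nat
  assumes "m \<le> n - m"
  shows "bij_betw (\<lambda>i. 1 + n - i) {m+1..n-m} {m+1..n-m}"
proof -
  have "inj_on (\<lambda>i. 1 + n - i) {m+1..n-m}"
  proof (rule inj_onI)
    fix x y assume "x \<in> {m+1..n-m}" "y \<in> {m+1..n-m}" "1 + n - x = 1 + n - y"
    then have "x \<le> n" "y \<le> n" "1 + n - x = 1 + n - y" by (auto intro: le_trans[OF _ diff_le_self])
    then show "x = y" by arith
  qed
  moreover have "(\<lambda>i. 1 + n - i) ` {m+1..n-m} = {m+1..n-m}"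
  proof
    show "(\<lambda>i. 1 + n - i) ` {m+1..n-m} \<subseteq> {m+1..n-m}" using assms by auto
    show "{m+1..n-m} \<subseteq> (\<lambda>i. 1 + n - i) ` {m+1..n-m}"
    proof
      fix j assume j: "j \<in> {m+1..n-m}"
      then have "j = 1 + n - (1 + n - j)" "1 + n - j \<in> {m+1..n-m}" using assms by auto
      then show "j \<in> (\<lambda>i. 1 + n - i) ` {m+1..n-m}" by blast
    qed
  qed
  ultimately show ?thesis by (simp add: bij_betw_def)
qed


lemma graph_cong: "(\<forall>i\<in>S. f i = g i) \<Longrightarrow> graph f S = graph g S"
  unfolding graph_def by auto

lemma csum_cong: "(\<forall>i\<in>S. f i = g i) \<Longrightarrow> csum a f S = csum a g S"
  unfolding csum_def by auto

theorem theorem6: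
  fixes n k :: nat and a b :: "nat \<Rightarrow> nat \<Rightarrow> real"
  assumes "k \<le> n" and "monge n a" and "anti_monge n b"
  defines "m \<equiv> (n - k) div 2"
  defines "I \<equiv> {1..m} \<union> {n + 1 - m..n}"
  shows "\<exists>M1 M2. recov_optimal n k a b M1 M2 \<and>
           (\<forall>i\<in>I. (i, i) \<in> M1) \<and>
           (\<forall>i\<in>I. (i, n + 1 - i) \<in> M2) \<and>
           optimal_assignment {m + 1..n - m} {m + 1..n - m} (\<lambda>i j. a i j + b i j) (M1 \<inter> M2)"
proof -
  have mgU: "mg {1..n} a" using assms(2) monge_mg by blast
  have amgU: "amg {1..n} b" using assms(3) anti_amg by blast
  define S where "S = {1..n}"
  define J where "J = {m+1..n-m}"
  define c where "c = (\<lambda>i j. a i j + b i j)"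
  have m2: "2 * m \<le> n - k" using m_def by auto
  have mle: "m \<le> n - m" using m2 by auto
  have cJ: "card J = n - 2 * m" unfolding J_def by simp
  have kJ: "k \<le> card J" using cJ m2 assms(1) by auto
  have JS: "J \<subseteq> S" unfolding J_def S_def by auto
  have fJ: "finite J" unfolding J_def by simp
  define X where "X = {M. perfect_matching_on J J M}"
  have fX: "finite X"
  proof -
    have "X \<subseteq> Pow (J \<times> J)" unfolding X_def perfect_matching_on_def by auto
    then show ?thesis using fJ finite_subset by blast
  qed
  have "graph id J \<in> X" unfolding X_def using fun_to_pm[of id J J] by simp
  then have neX: "X \<noteq> {}" by auto
  define V where "V = cost c ` X"
  have "Min V \<in> V" using fX neX V_def by simp
  then obtain M0 where M0X: "M0 \<in> X" and M0v: "cost c M0 = Min V" unfolding V_def by auto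
  have M0min: "\<forall>M\<in>X. cost c M0 \<le> cost c M" using M0v fX V_def by simp
  obtain P0 where P0: "bij_betw P0 J J" "M0 = graph P0 J" using pm_to_fun M0X X_def by blast
  define T1 where "T1 = tau1 J P0"
  define T2 where "T2 = tau2 1 n J P0"
  have T1J: "\<forall>i\<in>J. T1 i = P0 i" and T2J: "\<forall>i\<in>J. T2 i = P0 i"
    unfolding T1_def T2_def tau1_def tau2_def by auto
  have T1o: "\<forall>i\<in>S-J. T1 i = id i" and T2o: "\<forall>i\<in>S-J. T2 i = 1 + n - i"
    unfolding T1_def T2_def tau1_def tau2_def by auto
  have bT1J: "bij_betw T1 J J" using P0(1) T1J bij_betw_cong by metis
  have bT2J: "bij_betw T2 J J" using P0(1) T2J bij_betw_cong by metis
  have bid: "bij_betw id S S" by simp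
  have bT1: "bij_betw T1 S S" using patch_bij[OF bid JS] bT1J T1o by auto
  have brf: "bij_betw (\<lambda>i. 1 + n - i) S S" using refl_bij[of 0 n] S_def by simp
  have rfJ: "(\<lambda>i. 1 + n - i) ` J = J" using refl_bij[OF mle] J_def by (simp add: bij_betw_def)
  have bT2: "bij_betw T2 S S" using patch_bij[OF brf JS] bT2J T2o rfJ by auto
  have agJ: "agree T1 T2 S = J"
  proof
    show "J \<subseteq> agree T1 T2 S" using JS T1J T2J unfolding agree_def by auto
    show "agree T1 T2 S \<subseteq> J"
    proof
      fix i assume i: "i \<in> agree T1 T2 S"
      show "i \<in> J"
      proof (rule ccontr)
        assume "i \<notin> J"
        then have "i \<in> S - J" using i unfolding agree_def by auto
        then have "i = 1 + n - i" and "i \<le> m \<or> n - m < i" and "1 \<le> i" "i \<le> n"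
          using T1o T2o i unfolding agree_def S_def J_def by auto
        then show False using m2 by arith
      qed
    qed
  qed
  define M1 where "M1 = graph T1 S"
  define M2 where "M2 = graph T2 S"
  have feas: "recov_feasible n k M1 M2"
    unfolding recov_feasible_def M1_def M2_def
    using fun_to_pm[OF bT1] fun_to_pm[OF bT2] card_inter[of T1 S T2] agJ kJ S_def by auto
  have opt: "\<forall>N1 N2. recov_feasible n k N1 N2 \<longrightarrow> cost a M1 + cost b M2 \<le> cost a N1 + cost b N2"
  proof (intro allI impI)
    fix N1 N2 assume F: "recov_feasible n k N1 N2"
    obtain f1 where f1: "bij_betw f1 S S" "N1 = graph f1 S"
      using F pm_to_fun unfolding recov_feasible_def S_def by blast
    obtain f2 where f2: "bij_betw f2 S S" "N2 = graph f2 S"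
      using F pm_to_fun unfolding recov_feasible_def S_def by blast
    have ak: "k \<le> card (agree f1 f2 S)" using F f1 f2 card_inter unfolding recov_feasible_def by metis
    have "(n + 1 - 1 - k) div 2 = m" "k \<le> n + 1 - 1" "{1..n} \<subseteq> {1..n}" using m_def assms(1) by auto
    then obtain P where P: "bij_betw P {1+m..n-m} {1+m..n-m}"
      "csum a (tau1 {1+m..n-m} P) {1..n} + csum b (tau2 1 n {1+m..n-m} P) {1..n} \<le> csum a f1 {1..n} + csum b f2 {1..n}"
      using LB[OF mgU amgU, of k m] f1(1) f2(1) ak S_def by blast
    have Jeq: "{1+m..n-m} = J" unfolding J_def by auto
    define Q1 where "Q1 = tau1 J P"
    define Q2 where "Q2 = tau2 1 n J P"
    have PQ: "csum a Q1 S + csum b Q2 S \<le> cost a N1 + cost b N2"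
      using P(2) Jeq f1(2) f2(2) cost_graph S_def Q1_def Q2_def by simp
    have fS: "finite S" using S_def by simp
    have o1: "\<forall>i\<in>S-J. Q1 i = T1 i" and o2: "\<forall>i\<in>S-J. Q2 i = T2 i"
      unfolding Q1_def Q2_def T1_def T2_def tau1_def tau2_def by auto
    have q1: "csum a Q1 S = csum a T1 S - csum a T1 J + csum a Q1 J" using patch_sum[OF fS JS] o1 by blast
    have q2: "csum b Q2 S = csum b T2 S - csum b T2 J + csum b Q2 J" using patch_sum[OF fS JS] o2 by blast
    have r1: "csum a T1 J = csum a P0 J" "csum b T2 J = csum b P0 J"
      using T1J T2J csum_cong by blast+
    have r2: "csum a Q1 J = csum a P J" "csum b Q2 J = csum b P J"
      unfolding Q1_def Q2_def tau1_def tau2_def by (auto intro: csum_cong)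
    have PJ: "bij_betw P J J" using P(1) Jeq by simp
    have "graph P J \<in> X" unfolding X_def using fun_to_pm[OF PJ] by simp
    then have "cost c M0 \<le> cost c (graph P J)" using M0min by blast
    then have "csum c P0 J \<le> csum c P J" using P0(2) cost_graph by simp
    moreover have "csum c P0 J = csum a P0 J + csum b P0 J" "csum c P J = csum a P J + csum b P J"
      unfolding c_def csum_def by (simp_all add: sum.distrib)
    ultimately have "csum a P0 J + csum b P0 J \<le> csum a P J + csum b P J" by simp
    moreover have "cost a M1 + cost b M2 = csum a T1 S + csum b T2 S" using M1_def M2_def cost_graph by simp
    ultimately show "cost a M1 + cost b M2 \<le> cost a N1 + cost b N2" using PQ q1 q2 r1 r2 by linarith
  qed
  have p1: "\<forall>i\<in>I. (i, i) \<in> M1"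
  proof
    fix i assume "i \<in> I"
    then have "i \<in> S - J" using mle unfolding I_def S_def J_def by auto
    then show "(i, i) \<in> M1" using T1o unfolding M1_def graph_def by force
  qed
  have p2: "\<forall>i\<in>I. (i, n + 1 - i) \<in> M2"
  proof
    fix i assume "i \<in> I"
    then have "i \<in> S - J" using mle unfolding I_def S_def J_def by auto
    then show "(i, n + 1 - i) \<in> M2" using T2o unfolding M2_def graph_def by force
  qed
  have "M1 \<inter> M2 = graph T1 J" using graph_inter agJ M1_def M2_def by simp
  also have "... = M0" using P0(2) T1J graph_cong by metis
  finally have "M1 \<inter> M2 = M0" .
  then have p3: "optimal_assignment {m + 1..n - m} {m + 1..n - m} (\<lambda>i j. a i j + b i j) (M1 \<inter> M2)"
    using M0X M0min unfolding optimal_assignment_def X_def J_def c_def by auto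
  show ?thesis using feas opt p1 p2 p3 unfolding recov_optimal_def by blast
qed

end
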